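(* Let $s\geq 2$ and suppose $G_{(s,0)}$ acts faithfully and transitively on a set of $n$ points, and that the translation subgroup $T=\langle u,v\rangle$ has exactly $m=3$ orbits, each of size $k$ (so $n=3k$). Then $k=ds$ for some positive divisor $d$ of $s$.
   Context: $G_{(s,0)}$ is the group of the toroidal hypermap $(3,3,3)_{(s,0)}$: the Coxeter group $[3,3,3]=\langle\rho_0,\rho_1,\rho_2\mid \rho_i^2=1,\ (\rho_i\rho_j)^3=1\ (i\neq j)\rangle$ factored by $(\rho_0\rho_1\rho_2\rho_1)^s$. Here $u=\rho_0\rho_1\rho_2\rho_1$ and $v=\rho_1 u\rho_1=\rho_1\rho_0\rho_1\rho_2$; $T=\langle u,v\rangle$ is a normal abelian subgroup of order $s^2$, so its orbits are blocks of equal size. *)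

theory Defs
  imports Main
begin

text \<open>Words in the generators rho_0, rho_1, rho_2 are lists of letters 0,1,2.
  Since all generators are involutions, the inverse of a word is its reverse,
  so the group G_(s,0) is the quotient of the free monoid on {0,1,2} by the
  congruence generated by the defining relations.\<close>

inductive wequiv :: "nat \<Rightarrow> nat list \<Rightarrow> nat list \<Rightarrow> bool" for s :: nat where
  wrefl: "wequiv s w w"
| wsym: "wequiv s a b \<Longrightarrow> wequiv s b a"
| wtrans: "wequiv s a b \<Longrightarrow> wequiv s b c \<Longrightarrow> wequiv s a c"
| wcong: "wequiv s a b \<Longrightarrow> wequiv s (x @ a @ y) (x @ b @ y)"
| rel_inv: "i < 3 \<Longrightarrow> wequiv s [i, i] []"
| rel_braid: "i < 3 \<Longrightarrow> j < 3 \<Longrightarrow> i \<noteq> j \<Longrightarrow> wequiv s [i, j, i, j, i, j] []"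
| rel_s: "wequiv s (concat (replicate s [0, 1, 2, 1])) []"

definition gen_word :: "nat list \<Rightarrow> bool" where
  "gen_word w \<longleftrightarrow> set w \<subseteq> {0, 1, 2}"

fun wact :: "(nat \<Rightarrow> 'a \<Rightarrow> 'a) \<Rightarrow> nat list \<Rightarrow> 'a \<Rightarrow> 'a" where
  "wact r [] = id"
| "wact r (i # w) = r i \<circ> wact r w"

definition faithful_action :: "nat \<Rightarrow> (nat \<Rightarrow> 'a \<Rightarrow> 'a) \<Rightarrow> 'a set \<Rightarrow> bool" where
  "faithful_action s r X \<longleftrightarrow>
     (\<forall>i<3. bij_betw (r i) X X) \<and>
     (\<forall>w1 w2. gen_word w1 \<longrightarrow> gen_word w2 \<longrightarrow>
        ((\<forall>x\<in>X. wact r w1 x = wact r w2 x) \<longleftrightarrow> wequiv s w1 w2))"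

definition transitive_action :: "(nat \<Rightarrow> 'a \<Rightarrow> 'a) \<Rightarrow> 'a set \<Rightarrow> bool" where
  "transitive_action r X \<longleftrightarrow> (\<forall>x\<in>X. \<forall>y\<in>X. \<exists>w. gen_word w \<and> wact r w x = y)"

definition u_word :: "nat list" where "u_word = [0, 1, 2, 1]"
definition v_word :: "nat list" where "v_word = [1, 0, 1, 2]"

inductive_set T_words :: "nat list set" where
  "[] \<in> T_words"
| "w \<in> T_words \<Longrightarrow> u_word @ w \<in> T_words"
| "w \<in> T_words \<Longrightarrow> v_word @ w \<in> T_words"
| "w \<in> T_words \<Longrightarrow> rev u_word @ w \<in> T_words"
| "w \<in> T_words \<Longrightarrow> rev v_word @ w \<in> T_words"

definition T_orbit :: "(nat \<Rightarrow> 'a \<Rightarrow> 'a) \<Rightarrow> 'a \<Rightarrow> 'a set" where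
  "T_orbit r x = {wact r w x | w. w \<in> T_words}"

end

theory Submission
  imports Defs
begin

lemma wact_append: "wact r (a @ b) = wact r a \<circ> wact r b"
  by (induction a) auto

lemma wact_pow: "wact r (concat (replicate n w)) = (wact r w) ^^ n"
  by (induction n) (auto simp: wact_append)

definition mdl :: "int \<Rightarrow> nat \<Rightarrow> int \<times> int \<times> int \<Rightarrow> int \<times> int \<times> int" where
  "mdl s i p = (case p of (a,b,c) \<Rightarrow>
     if i = 0 then ((c+1) mod s, b, (a-1) mod s)
     else if i = 1 then (b,a,c) else if i = 2 then (a,c,b) else (a,b,c))"

definition Red :: "int \<Rightarrow> (int \<times> int \<times> int) set" where
  "Red s = {(a,b,c). 0 \<le> a \<and> a < s \<and> 0 \<le> b \<and> b < s \<and> 0 \<le> c \<and> c < s}"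

lemma mdl_Red: "s > 0 \<Longrightarrow> p \<in> Red s \<Longrightarrow> mdl s i p \<in> Red s"
  by (cases p) (auto simp: mdl_def Red_def)

lemma wact_Red: "s > 0 \<Longrightarrow> p \<in> Red s \<Longrightarrow> wact (mdl s) w p \<in> Red s"
  by (induction w arbitrary: p) (auto simp: mdl_Red)

lemma u_model: "s > 0 \<Longrightarrow> 0 \<le> a \<Longrightarrow> a < s \<Longrightarrow> 0 \<le> b \<Longrightarrow> b < s \<Longrightarrow> 0 \<le> c \<Longrightarrow> c < s \<Longrightarrow>
   (wact (mdl s) [0,1,2,1] ^^ n) (a,b,c) = ((a + int n) mod s, b, (c - int n) mod s)"
proof (induction n)
  case 0 then show ?case by simp
next
  case (Suc n) then show ?case by (simp add: mdl_def mod_simps algebra_simps)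
qed

lemma braid_model:
  assumes "s > 0"
  shows "\<forall>p\<in>Red s. wact (mdl s) [0,1,0,1,0,1] p = p"
    "\<forall>p\<in>Red s. wact (mdl s) [1,0,1,0,1,0] p = p"
    "\<forall>p\<in>Red s. wact (mdl s) [0,2,0,2,0,2] p = p"
    "\<forall>p\<in>Red s. wact (mdl s) [2,0,2,0,2,0] p = p"
    "\<forall>p\<in>Red s. wact (mdl s) [1,2,1,2,1,2] p = p"
    "\<forall>p\<in>Red s. wact (mdl s) [2,1,2,1,2,1] p = p"
  using assms by (auto simp: Red_def mdl_def mod_simps)

lemma model_sound:
  assumes "wequiv (nat s) w1 w2" "s > 0"
  shows "\<forall>p\<in>Red s. wact (mdl s) w1 p = wact (mdl s) w2 p"
  using assms
proof (induction rule: wequiv.induct)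
  case (wcong a b x y)
  then show ?case by (auto simp: wact_append wact_Red)
next
  case (rel_inv i)
  then show ?case by (auto simp: Red_def mdl_def mod_simps less_Suc_eq numeral_3_eq_3)
next
  case (rel_braid i j)
  then have "(i,j) \<in> {(0,1),(1,0),(0,2),(2,0),(1,2),(2,1)}"
    by (auto simp: less_Suc_eq numeral_3_eq_3)
  then show ?case using braid_model[OF \<open>s > 0\<close>] by auto
next
  case rel_s
  show ?case
  proof
    fix p assume "p \<in> Red s"
    then obtain a b c where "p = (a,b,c)" "0 \<le> a" "a < s" "0 \<le> b" "b < s" "0 \<le> c" "c < s"
      by (auto simp: Red_def)
    then show "wact (mdl s) (concat (replicate (nat s) [0, 1, 2, 1])) p = wact (mdl s) [] p"
      using rel_s u_model[of s a b c "nat s"] by (simp add: wact_pow)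
  qed
qed auto

lemma funpow_closed: "(\<And>x. x \<in> X \<Longrightarrow> f x \<in> X) \<Longrightarrow> x \<in> X \<Longrightarrow> (f ^^ n) x \<in> X"
  by (induction n) auto

lemma gen_concat: "gen_word w \<Longrightarrow> gen_word (concat (replicate n w))"
  by (induction n) (auto simp: gen_word_def)

lemma modshift: "a0 < (s::nat) \<Longrightarrow> x < s \<Longrightarrow> ((x + a0) mod s + (s - a0)) mod s = x"
proof -
  assume a: "a0 < s" "x < s"
  have "((x + a0) mod s + (s - a0)) mod s = (x + a0 + (s - a0)) mod s" by (rule mod_add_left_eq)
  also have "x + a0 + (s - a0) = x + s" using a by simp
  finally show ?thesis using a by simp
qed

lemma modshift2: "a0 < (s::nat) \<Longrightarrow> x < s \<Longrightarrow> ((x + (s - a0)) mod s + a0) mod s = x"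
proof -
  assume a: "a0 < s" "x < s"
  have "((x + (s - a0)) mod s + a0) mod s = (x + (s - a0) + a0) mod s" by (rule mod_add_left_eq)
  also have "x + (s - a0) + a0 = x + s" using a by simp
  finally show ?thesis using a by simp
qed

locale tor =
  fixes s :: nat and X :: "'a set" and r :: "nat \<Rightarrow> 'a \<Rightarrow> 'a"
  assumes s2: "s \<ge> 2" and fa: "faithful_action s r X"
begin

lemma cl: "i < 3 \<Longrightarrow> x \<in> X \<Longrightarrow> r i x \<in> X"
  using fa unfolding faithful_action_def bij_betw_def by blast

lemma cl0[simp]: "x \<in> X \<Longrightarrow> r 0 x \<in> X"
  and cl1[simp]: "x \<in> X \<Longrightarrow> r 1 x \<in> X"
  and cl1'[simp]: "x \<in> X \<Longrightarrow> r (Suc 0) x \<in> X"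
  and cl2[simp]: "x \<in> X \<Longrightarrow> r 2 x \<in> X"
  using cl[of 0 x] cl[of 1 x] cl[of 2 x] by auto

lemma eqv: "gen_word w1 \<Longrightarrow> gen_word w2 \<Longrightarrow> wequiv s w1 w2 \<Longrightarrow> x \<in> X \<Longrightarrow> wact r w1 x = wact r w2 x"
  using fa unfolding faithful_action_def by blast

lemma inv0[simp]: "x \<in> X \<Longrightarrow> r 0 (r 0 x) = x"
  using eqv[of "[0,0]" "[]", OF _ _ rel_inv] by (simp add: gen_word_def)
lemma inv1[simp]: "x \<in> X \<Longrightarrow> r 1 (r 1 x) = x"
  using eqv[of "[1,1]" "[]", OF _ _ rel_inv] by (simp add: gen_word_def)
lemma inv1'[simp]: "x \<in> X \<Longrightarrow> r (Suc 0) (r (Suc 0) x) = x"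
  using inv1 by simp
lemma inv2[simp]: "x \<in> X \<Longrightarrow> r 2 (r 2 x) = x"
  using eqv[of "[2,2]" "[]", OF _ _ rel_inv] by (simp add: gen_word_def)

lemma br: "i < 3 \<Longrightarrow> j < 3 \<Longrightarrow> i \<noteq> j \<Longrightarrow> i \<in> {0,1,2} \<Longrightarrow> j \<in> {0,1,2} \<Longrightarrow> x \<in> X \<Longrightarrow>
   r i (r j (r i (r j (r i (r j x))))) = x"
  using eqv[of "[i,j,i,j,i,j]" "[]", OF _ _ rel_braid] by (simp add: gen_word_def)

lemma b01: "x \<in> X \<Longrightarrow> r 0 (r 1 (r 0 x)) = r 1 (r 0 (r 1 x))"
  using br[of 0 1 "r 1 (r 0 (r 1 x))"] by simp
lemma b02: "x \<in> X \<Longrightarrow> r 0 (r 2 (r 0 x)) = r 2 (r 0 (r 2 x))"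
  using br[of 0 2 "r 2 (r 0 (r 2 x))"] by simp
lemma b12: "x \<in> X \<Longrightarrow> r 1 (r 2 (r 1 x)) = r 2 (r 1 (r 2 x))"
  using br[of 1 2 "r 2 (r 1 (r 2 x))"] by simp

definition U where "U x = r 0 (r 1 (r 2 (r 1 x)))"
definition V where "V x = r 1 (r 0 (r 1 (r 2 x)))"

lemma Ucl[simp]: "x \<in> X \<Longrightarrow> U x \<in> X" and Vcl[simp]: "x \<in> X \<Longrightarrow> V x \<in> X"
  by (auto simp: U_def V_def)

lemma wact_u: "wact r u_word = U" by (auto simp: u_word_def U_def)
lemma wact_v: "wact r v_word = V" by (auto simp: v_word_def V_def)

lemma UV: "x \<in> X \<Longrightarrow> U (V x) = V (U x)"
proof -
  assume x: "x \<in> X"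
  have "V (U x) = r 1 (r 0 (r 1 (r 2 (r 0 (r 1 (r 2 (r 1 x)))))))" by (simp add: U_def V_def)
  also have "\<dots> = r 0 (r 1 (r 0 (r 2 (r 0 (r 1 (r 2 (r 1 x)))))))" using b01 x by simp
  also have "\<dots> = r 0 (r 1 (r 2 (r 0 (r 2 (r 1 (r 2 (r 1 x)))))))" using b02 x by simp
  also have "\<dots> = r 0 (r 1 (r 2 (r 0 (r 1 (r 2 x)))))" using b12[of "r 1 x"] x by simp
  also have "\<dots> = U (V x)" using x by (simp add: U_def V_def)
  finally show ?thesis by simp
qed

lemma Us: "x \<in> X \<Longrightarrow> (U ^^ s) x = x"
proof -
  assume x: "x \<in> X"
  have g: "gen_word (concat (replicate s u_word))"
    by (rule gen_concat) (simp add: gen_word_def u_word_def)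
  have "wact r (concat (replicate s u_word)) x = wact r [] x"
    using eqv[OF g _ rel_s[folded u_word_def] x] by (simp add: gen_word_def)
  then show ?thesis by (simp add: wact_pow wact_u)
qed

lemma V_U: "x \<in> X \<Longrightarrow> V x = r 1 (U (r 1 x))" by (simp add: U_def V_def)

lemma Vpow: "x \<in> X \<Longrightarrow> (V ^^ n) x = r 1 ((U ^^ n) (r 1 x))"
proof (induction n)
  case (Suc n)
  have "(U ^^ n) (r 1 x) \<in> X" using Suc funpow_closed[of X U] by simp
  then show ?case using Suc by (simp add: V_U)
qed simp

lemma Vs: "x \<in> X \<Longrightarrow> (V ^^ s) x = x"
  by (simp add: Vpow Us)

lemma Upcl[simp]: "x \<in> X \<Longrightarrow> (U ^^ n) x \<in> X" using funpow_closed[of X U] by simp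
lemma Vpcl[simp]: "x \<in> X \<Longrightarrow> (V ^^ n) x \<in> X" using funpow_closed[of X V] by simp

lemma UVpow: "x \<in> X \<Longrightarrow> (V ^^ b) ((U ^^ a) x) = (U ^^ a) ((V ^^ b) x)"
proof -
  have 1: "x \<in> X \<Longrightarrow> V ((U ^^ a) x) = (U ^^ a) (V x)" for x a
    by (induction a) (auto simp: UV[symmetric])
  show "x \<in> X \<Longrightarrow> ?thesis"
    by (induction b) (auto simp: 1)
qed

lemma Upow_add: "(U ^^ (a + b)) x = (U ^^ a) ((U ^^ b) x)" by (simp add: funpow_add)
lemma Vpow_add: "(V ^^ (a + b)) x = (V ^^ a) ((V ^^ b) x)" by (simp add: funpow_add)

lemma Umult: "x \<in> X \<Longrightarrow> (U ^^ (s * q)) x = x"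
  by (induction q) (auto simp: Upow_add Us)
lemma Vmult: "x \<in> X \<Longrightarrow> (V ^^ (s * q)) x = x"
  by (induction q) (auto simp: Vpow_add Vs)

lemma Umod: "x \<in> X \<Longrightarrow> (U ^^ (a mod s)) x = (U ^^ a) x"
  by (metis Umult Upow_add div_mult_mod_eq mult.commute add.commute)
lemma Vmod: "x \<in> X \<Longrightarrow> (V ^^ (a mod s)) x = (V ^^ a) x"
  by (metis Vmult Vpow_add div_mult_mod_eq mult.commute add.commute)


definition E where "E a b z = (U ^^ a) ((V ^^ b) z)"

lemma Ecl[simp]: "x \<in> X \<Longrightarrow> E a b x \<in> X" by (simp add: E_def)

lemma E_comp: "x \<in> X \<Longrightarrow> E a b (E c d x) = E (a + c) (b + d) x"
  by (simp add: E_def UVpow Upow_add Vpow_add)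

lemma E_mod: "x \<in> X \<Longrightarrow> E (a mod s) (b mod s) x = E a b x"
  by (simp add: E_def Umod Vmod)

lemma E_inv: "x \<in> X \<Longrightarrow> c \<le> s \<Longrightarrow> d \<le> s \<Longrightarrow> E (s - c) (s - d) (E c d x) = x"
  by (simp add: E_comp) (simp add: E_def Us Vs)

lemma E_inj: "x \<in> X \<Longrightarrow> y \<in> X \<Longrightarrow> c \<le> s \<Longrightarrow> d \<le> s \<Longrightarrow> E c d x = E c d y \<Longrightarrow> x = y"
  by (metis E_inv)

lemma E_00[simp]: "E 0 0 x = x" by (simp add: E_def)

definition Ui where "Ui x = r 1 (r 2 (r 1 (r 0 x)))"
definition Vi where "Vi x = r 2 (r 1 (r 0 (r 1 x)))"

lemma Ui_U: "x \<in> X \<Longrightarrow> Ui (U x) = x" by (simp add: U_def Ui_def)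
lemma Vi_V: "x \<in> X \<Longrightarrow> Vi (V x) = x" by (simp add: V_def Vi_def)

lemma Ui_pow: "x \<in> X \<Longrightarrow> Ui x = (U ^^ (s - 1)) x"
proof -
  assume x: "x \<in> X"
  have "s = Suc (s - 1)" using s2 by simp
  then have "Ui x = Ui (U ((U ^^ (s - 1)) x))" using Us[OF x]
    by (metis funpow.simps(2) o_apply)
  then show ?thesis using x by (simp add: Ui_U)
qed

lemma Vi_pow: "x \<in> X \<Longrightarrow> Vi x = (V ^^ (s - 1)) x"
proof -
  assume x: "x \<in> X"
  have "s = Suc (s - 1)" using s2 by simp
  then have "Vi x = Vi (V ((V ^^ (s - 1)) x))" using Vs[OF x]
    by (metis funpow.simps(2) o_apply)
  then show ?thesis using x by (simp add: Vi_V)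
qed

lemma T_sub: "w \<in> T_words \<Longrightarrow> x \<in> X \<Longrightarrow> \<exists>a b. wact r w x = E a b x"
proof (induction rule: T_words.induct)
  case 1 then show ?case by (metis E_00 wact.simps(1) id_apply)
next
  case (2 w)
  then obtain a b where "wact r w x = E a b x" by blast
  then have "wact r (u_word @ w) x = E (Suc a) b x" using 2 by (simp add: wact_append wact_u E_def)
  then show ?case by blast
next
  case (3 w)
  then obtain a b where "wact r w x = E a b x" by blast
  then have "wact r (v_word @ w) x = E (0 + a) (1 + b) x" using 3 E_comp[of x 0 1 a b]
    by (simp add: wact_append wact_v E_def)
  then show ?case by blast
next
  case (4 w)
  then obtain a b where e: "wact r w x = E a b x" by blast
  have "wact r (rev u_word) = Ui" by (auto simp: u_word_def Ui_def)
  then have "wact r (rev u_word @ w) x = E (s - 1) 0 (E a b x)"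
    using 4 e by (simp add: wact_append Ui_pow E_def)
  then show ?case using 4 E_comp by auto
next
  case (5 w)
  then obtain a b where e: "wact r w x = E a b x" by blast
  have "wact r (rev v_word) = Vi" by (auto simp: v_word_def Vi_def)
  then have "wact r (rev v_word @ w) x = E 0 (s - 1) (E a b x)"
    using 5 e by (simp add: wact_append Vi_pow E_def)
  then show ?case using 5 E_comp by auto
qed

lemma pw_u: "w \<in> T_words \<Longrightarrow> concat (replicate n u_word) @ w \<in> T_words"
  by (induction n) (auto intro: T_words.intros)
lemma pw_v: "w \<in> T_words \<Longrightarrow> concat (replicate n v_word) @ w \<in> T_words"
  by (induction n) (auto intro: T_words.intros)

lemma T_sup: "E a b x \<in> T_orbit r x"
proof -
  have "concat (replicate a u_word) @ concat (replicate b v_word) @ [] \<in> T_words"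
    by (intro pw_u pw_v T_words.intros)
  moreover have "wact r (concat (replicate a u_word) @ concat (replicate b v_word) @ []) x = E a b x"
    by (simp add: wact_append wact_pow wact_u wact_v E_def)
  ultimately show ?thesis unfolding T_orbit_def by force
qed

lemma orbit_E: "x \<in> X \<Longrightarrow> T_orbit r x = {E a b x | a b. True}"
  using T_sub T_sup unfolding T_orbit_def by fastforce

lemma orbit_D: "x \<in> X \<Longrightarrow> T_orbit r x = (\<lambda>p. E (fst p) (snd p) x) ` ({0..<s} \<times> {0..<s})"
proof -
  assume x: "x \<in> X"
  have "s > 0" using s2 by simp
  show ?thesis unfolding orbit_E[OF x]
  proof (intro equalityI subsetI)
    fix y assume "y \<in> {E a b x | a b. True}"
    then obtain a b where y: "y = E a b x" by blast
    then have "y = E (a mod s) (b mod s) x" using E_mod x by simp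
    then show "y \<in> (\<lambda>p. E (fst p) (snd p) x) ` ({0..<s} \<times> {0..<s})"
      using \<open>s > 0\<close> by (intro image_eqI[of _ _ "(a mod s, b mod s)"]) auto
  qed auto
qed


lemma partA: "x \<in> X \<Longrightarrow> card (T_orbit r x) dvd s ^ 2"
proof -
  assume x: "x \<in> X"
  have s0: "s > 0" using s2 by simp
  define D where "D = {0..<s} \<times> {0..<s}"
  define f where "f p = E (fst p) (snd p) x" for p
  define Ob where "Ob = T_orbit r x"
  define F where "F y = {p \<in> D. f p = y}" for y
  have Ob: "Ob = f ` D" unfolding Ob_def D_def f_def using orbit_D[OF x] by simp
  have fD: "finite D" unfolding D_def by simp
  have fX: "f p \<in> X" for p unfolding f_def using x by simp
  have Fc: "card (F y) = card (F x)" if y: "y \<in> Ob" for y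
  proof -
    obtain a0 b0 where p0: "(a0, b0) \<in> D" "f (a0, b0) = y" using y Ob by auto
    have a0: "a0 < s" "b0 < s" using p0 by (auto simp: D_def)
    define t where "t p = ((fst p + a0) mod s, (snd p + b0) mod s)" for p
    define t' where "t' p = ((fst p + (s - a0)) mod s, (snd p + (s - b0)) mod s)" for p
    have ft: "f (t p) = E a0 b0 (f p)" for p
      unfolding f_def t_def using x E_mod E_comp by (simp add: add.commute)
    have tt': "t (t' q) = q" if "q \<in> D" for q
      using that a0 unfolding t_def t'_def D_def by (auto simp del: add_diff_assoc simp add: modshift2)
    have t't: "t' (t q) = q" if "q \<in> D" for q
      using that a0 unfolding t_def t'_def D_def by (auto simp del: add_diff_assoc simp add: modshift)
    have tD: "t p \<in> D" for p unfolding t_def D_def using s0 by auto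
    have t'D: "t' p \<in> D" for p unfolding t'_def D_def using s0 by auto
    have 1: "card (F x) \<le> card (F y)"
    proof (rule card_inj_on_le[of t])
      show "inj_on t (F x)" by (rule inj_on_inverseI[of _ t']) (auto simp: F_def t't)
      show "t ` F x \<subseteq> F y"
      proof
        fix q assume "q \<in> t ` F x"
        then obtain p where p: "p \<in> D" "f p = x" "q = t p" by (auto simp: F_def)
        have "f q = E a0 b0 x" using p ft[of p] by simp
        also have "\<dots> = y" using p0(2) by (simp add: f_def)
        finally show "q \<in> F y" using p tD by (simp add: F_def)
      qed
      show "finite (F y)" using fD by (simp add: F_def)
    qed
    have 2: "card (F y) \<le> card (F x)"
    proof (rule card_inj_on_le[of t'])
      show "inj_on t' (F y)" by (rule inj_on_inverseI[of _ t]) (auto simp: F_def tt')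
      show "t' ` F y \<subseteq> F x"
      proof
        fix p assume "p \<in> t' ` F y"
        then obtain q where q: "q \<in> D" "f q = y" "p = t' q" by (auto simp: F_def)
        have "E a0 b0 (f p) = E a0 b0 x"
          using q p0 ft[of p] tt'[OF q(1)] by (simp add: f_def)
        then have "f p = x" by (metis E_inj fX x a0 less_imp_le)
        then show "p \<in> F x" using q t'D by (simp add: F_def)
      qed
      show "finite (F x)" using fD by (simp add: F_def)
    qed
    from 1 2 show ?thesis by simp
  qed
  have DU: "D = (\<Union>y\<in>Ob. F y)" unfolding F_def Ob by blast
  have fO: "finite Ob" unfolding Ob using fD by simp
  have fF: "\<forall>y\<in>Ob. finite (F y)" using fD unfolding F_def by simp
  have dj: "\<forall>y\<in>Ob. \<forall>z\<in>Ob. y \<noteq> z \<longrightarrow> F y \<inter> F z = {}" unfolding F_def by blast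
  have "card D = (\<Sum>y\<in>Ob. card (F y))"
    unfolding DU by (rule card_UN_disjoint[OF fO fF dj])
  also have "\<dots> = card Ob * card (F x)" using Fc by simp
  finally have "s ^ 2 = card Ob * card (F x)" by (simp add: D_def power2_eq_square)
  then show ?thesis unfolding Ob_def by simp
qed


definition per where "per x = (LEAST j. 0 < j \<and> (U ^^ j) x = x)"

lemma per: "x \<in> X \<Longrightarrow> 0 < per x \<and> (U ^^ per x) x = x"
  unfolding per_def by (rule LeastI[of _ s]) (use s2 Us in auto)

lemma Upmult: "(U ^^ m) x = x \<Longrightarrow> (U ^^ (m * q)) x = x"
  by (induction q) (auto simp: funpow_add)

lemma Ue: "(U ^^ j) x = E j 0 x" by (simp add: E_def)

lemma per_dvd: "x \<in> X \<Longrightarrow> (U ^^ j) x = x \<Longrightarrow> per x dvd j"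
proof -
  assume x: "x \<in> X" and j: "(U ^^ j) x = x"
  let ?p = "per x"
  have p: "0 < ?p" "(U ^^ ?p) x = x" using per[OF x] by auto
  have "j = j mod ?p + ?p * (j div ?p)" by simp
  then have "(U ^^ j) x = (U ^^ (j mod ?p)) ((U ^^ (?p * (j div ?p))) x)"
    by (metis funpow_add o_apply)
  then have m: "(U ^^ (j mod ?p)) x = x" using j Upmult[OF p(2)] by simp
  have "\<not> (0 < j mod ?p \<and> (U ^^ (j mod ?p)) x = x)"
    unfolding per_def by (rule not_less_Least) (use p(1) in \<open>simp add: per_def\<close>)
  with m have "j mod ?p = 0" by simp
  then show ?thesis by auto
qed

lemma per_le: "x \<in> X \<Longrightarrow> per x \<le> s"
  using per_dvd[OF _ Us] s2 by (simp add: dvd_imp_le)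

definition Ux where "Ux y = {(U ^^ j) y | j. True}"

lemma card_Ux: "x \<in> X \<Longrightarrow> card (Ux x) = per x"
proof -
  assume x: "x \<in> X"
  let ?p = "per x"
  have p: "0 < ?p" "(U ^^ ?p) x = x" using per[OF x] by auto
  have eq: "Ux x = (\<lambda>j. (U ^^ j) x) ` {0..<?p}"
  proof (intro equalityI subsetI)
    fix y assume "y \<in> Ux x"
    then obtain j where y: "y = (U ^^ j) x" by (auto simp: Ux_def)
    have "j = j mod ?p + ?p * (j div ?p)" by simp
    then have "(U ^^ j) x = (U ^^ (j mod ?p)) ((U ^^ (?p * (j div ?p))) x)"
      by (metis funpow_add o_apply)
    then have "y = (U ^^ (j mod ?p)) x" using y Upmult[OF p(2)] by simp
    then show "y \<in> (\<lambda>j. (U ^^ j) x) ` {0..<?p}" using p(1) by auto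
  qed (auto simp: Ux_def)
  have lt: "False" if ij: "i < j" "j < ?p" "(U ^^ i) x = (U ^^ j) x" for i j
  proof -
    have "(U ^^ j) x = (U ^^ i) ((U ^^ (j - i)) x)" using ij
      by (metis funpow_add o_apply le_add_diff_inverse less_imp_le)
    then have "E i 0 x = E i 0 ((U ^^ (j - i)) x)" using ij by (simp add: Ue)
    moreover have "i \<le> s" using ij per_le[OF x] by simp
    ultimately have "(U ^^ (j - i)) x = x" using E_inj[of x "(U ^^ (j - i)) x" i 0] x by simp
    then have "?p dvd (j - i)" by (rule per_dvd[OF x])
    then show False using ij by (simp add: nat_dvd_not_less)
  qed
  have "inj_on (\<lambda>j. (U ^^ j) x) {0..<?p}"
    by (rule inj_onI) (metis atLeastLessThan_iff linorder_neqE_nat lt)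
  then show ?thesis unfolding eq by (simp add: card_image)
qed

lemma Ux_E: "x \<in> X \<Longrightarrow> Ux (E a b x) = E a b ` Ux x"
proof -
  assume x: "x \<in> X"
  have "(U ^^ j) (E a b x) = E a b ((U ^^ j) x)" for j
    using x by (simp add: Ue E_comp add.commute)
  then show ?thesis unfolding Ux_def by auto
qed

lemma card_Ux_E: "x \<in> X \<Longrightarrow> card (Ux (E a b x)) = card (Ux x)"
proof -
  assume x: "x \<in> X"
  have sub: "Ux x \<subseteq> X" using x by (auto simp: Ux_def)
  have "s > 0" using s2 by simp
  have "inj_on (E a b) (Ux x)"
  proof (rule inj_onI)
    fix y z assume "y \<in> Ux x" "z \<in> Ux x" "E a b y = E a b z"
    then have yz12: "y \<in> X" "z \<in> X" and e: "E a b y = E a b z" using sub by auto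
    have yz: "y \<in> X" "z \<in> X" "E (a mod s) (b mod s) y = E (a mod s) (b mod s) z"
      using E_mod[of y a b] E_mod[of z a b] yz12 e by auto
    show "y = z" by (rule E_inj[OF yz(1,2) _ _ yz(3)]) (use \<open>s > 0\<close> in auto)
  qed
  then show ?thesis by (simp add: Ux_E[OF x] card_image)
qed

lemma Ux_same: "y \<in> X \<Longrightarrow> z \<in> Ux y \<Longrightarrow> Ux z = Ux y"
proof -
  assume y: "y \<in> X" and "z \<in> Ux y"
  then obtain j where z: "z = (U ^^ j) y" by (auto simp: Ux_def)
  have 1: "(U ^^ i) z = (U ^^ (i + j)) y" for i by (simp add: z funpow_add)
  have 2: "(U ^^ i) y = (U ^^ (i + s * j - j)) z" for i
  proof -
    have sj: "s * j \<ge> j" using s2 by simp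
    have e: "i + s * j = (i + s * j - j) + j" using sj by linarith
    have "(U ^^ (i + s * j - j)) z = (U ^^ (i + s * j)) y" unfolding z by (metis e funpow_add o_apply)
    also have "\<dots> = (U ^^ i) y" using Umult[OF y] by (simp add: funpow_add)
    finally show ?thesis by simp
  qed
  show ?thesis unfolding Ux_def using 1 2 by blast
qed

lemma partB: "\<forall>x\<in>X. card (T_orbit r x) = k \<Longrightarrow> x \<in> X \<Longrightarrow> per x dvd k"
proof -
  assume k: "\<forall>x\<in>X. card (T_orbit r x) = k" and x: "x \<in> X"
  define Ob where "Ob = T_orbit r x"
  have Ob: "Ob = {E a b x | a b. True}" using orbit_E[OF x] Ob_def by simp
  have fO: "finite Ob" unfolding Ob_def orbit_D[OF x] by simp
  have ObX: "Ob \<subseteq> X" using x Ob by auto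
  have UO: "\<Union> (Ux ` Ob) = Ob"
  proof (intro equalityI subsetI)
    fix z assume "z \<in> \<Union> (Ux ` Ob)"
    then obtain a b j where "z = (U ^^ j) (E a b x)" unfolding Ob Ux_def by auto
    then have "z = E (j + a) b x" using x by (simp add: Ue E_comp)
    then show "z \<in> Ob" unfolding Ob by blast
  next
    fix z assume "z \<in> Ob"
    moreover have "z \<in> Ux z" unfolding Ux_def by (metis (mono_tags, lifting) funpow_0 mem_Collect_eq)
    ultimately show "z \<in> \<Union> (Ux ` Ob)" by blast
  qed
  have cc: "\<forall>c\<in>Ux ` Ob. card c = per x"
    using card_Ux_E[OF x] card_Ux[OF x] unfolding Ob by auto
  have dj: "\<forall>c1\<in>Ux ` Ob. \<forall>c2\<in>Ux ` Ob. c1 \<noteq> c2 \<longrightarrow> c1 \<inter> c2 = {}"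
  proof (intro ballI impI)
    fix c1 c2 assume c: "c1 \<in> Ux ` Ob" "c2 \<in> Ux ` Ob" "c1 \<noteq> c2"
    then obtain y1 y2 where y: "y1 \<in> Ob" "y2 \<in> Ob" "c1 = Ux y1" "c2 = Ux y2" by auto
    show "c1 \<inter> c2 = {}"
    proof (rule ccontr)
      assume "c1 \<inter> c2 \<noteq> {}"
      then obtain z where "z \<in> Ux y1" "z \<in> Ux y2" using y by auto
      then have "Ux y1 = Ux y2" using Ux_same y ObX by (metis subsetD)
      then show False using c y by simp
    qed
  qed
  have fC: "finite (Ux ` Ob)" using fO by simp
  have fU: "finite (\<Union> (Ux ` Ob))" using fO UO by simp
  have "per x * card (Ux ` Ob) = card (\<Union> (Ux ` Ob))"
    using card_partition[OF fC fU, of "per x"] cc dj by blast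
  also have "\<dots> = k" using UO k x Ob_def by simp
  finally show ?thesis by (metis dvd_triv_left)
qed

end


theorem mainTheorem10:
  fixes s n k :: nat and X :: "'a set" and r :: "nat \<Rightarrow> 'a \<Rightarrow> 'a"
  assumes "s \<ge> 2"
    and "finite X" and "card X = n"
    and "faithful_action s r X"
    and "transitive_action r X"
    and "card (T_orbit r ` X) = 3"
    and "\<forall>x\<in>X. card (T_orbit r x) = k"
  shows "\<exists>d. d > 0 \<and> d dvd s \<and> k = d * s"
proof -
  interpret tor s X r using assms(1,4) by unfold_locales
  have s0: "s > 0" using assms(1) by simp
  have "X \<noteq> {}" using assms(6) by auto
  then obtain x0 where x0: "x0 \<in> X" by auto
  have k: "card (T_orbit r x0) = k" using assms(7) x0 by simp
  have "x0 \<in> T_orbit r x0" using T_sup[of 0 0 x0] by simp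
  moreover have "finite (T_orbit r x0)" using orbit_D[OF x0] by simp
  ultimately have kpos: "k > 0" using k by (metis card_gt_0_iff empty_iff)
  have A: "k dvd s ^ 2" using partA[OF x0] k by simp
  have B: "s dvd k"
  proof (rule ccontr)
    assume nd: "\<not> s dvd k"
    define g where "g = gcd k s"
    have gs: "g dvd s" "g \<noteq> s" using nd unfolding g_def by (auto, metis gcd_dvd1)
    have g0: "0 < g" using s0 unfolding g_def by simp
    have gl: "g < s" using gs s0 dvd_imp_le by (metis le_neq_implies_less)
    have Ug: "(U ^^ g) x = x" if x: "x \<in> X" for x
    proof -
      have "per x dvd k" using partB[OF assms(7) x] .
      moreover have "per x dvd s" using per_dvd[OF x Us[OF x]] .
      ultimately have "per x dvd g" unfolding g_def by simp
      then obtain q where "g = per x * q" by auto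
      then show ?thesis using Upmult per[OF x] by simp
    qed
    have gw: "gen_word (concat (replicate g u_word))"
      by (rule gen_concat) (simp add: gen_word_def u_word_def)
    have ea: "\<forall>x\<in>X. wact r (concat (replicate g u_word)) x = wact r [] x"
      using Ug by (simp add: wact_pow wact_u)
    have ff: "\<forall>w1 w2. gen_word w1 \<longrightarrow> gen_word w2 \<longrightarrow>
        ((\<forall>x\<in>X. wact r w1 x = wact r w2 x) \<longleftrightarrow> wequiv s w1 w2)"
      using assms(4) unfolding faithful_action_def by blast
    have ge: "gen_word []" by (simp add: gen_word_def)
    have "wequiv s (concat (replicate g u_word)) []"
      using ff gw ge ea by blast
    then have w: "wequiv (nat (int s)) (concat (replicate g [0,1,2,1])) []" by (simp add: u_word_def)
    have red: "(0, 0, 0) \<in> Red (int s)" using s0 by (simp add: Red_def)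
    have "wact (mdl (int s)) (concat (replicate g [0,1,2,1])) (0,0,0) = (0,0,0)"
      using model_sound[OF w] s0 red by simp
    then have "int g mod int s = 0" using u_model[of "int s" 0 0 0 g] s0 by (simp add: wact_pow)
    then show False using g0 gl by simp
  qed
  then obtain d where d: "k = s * d" by auto
  have "d > 0" using d kpos by simp
  moreover have "d dvd s"
  proof -
    have "s * d dvd s * s" using A d by (simp add: power2_eq_square)
    then show ?thesis using s0 by simp
  qed
  ultimately show ?thesis using d by (metis mult.commute)
qed

end
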